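(* Let $\mathbb{S}\subseteq\mathbb{R}$ be an interval, let $Q:\mathbb{S}\to\mathbb{R}$ be continuous and twice differentiable, and let $q(z)=Q'(z)$. For $\mathbf{z}\in\mathbb{S}^K$ set $p_k(\mathbf{z})=e^{Q(z_k)}/\sum_{j=1}^K e^{Q(z_j)}$, $k=1,\dots,K$, and for $\hat{\mathbf{s}},\mathbf{s}\in\mathbb{S}^K$ define $$\mathcal{L}_m(\hat{\mathbf{s}},\mathbf{s})=\log\Big\{\sum_{k=1}^K e^{Q(\hat s_k)}\Big\}-\log\Big\{\sum_{k=1}^K e^{Q(s_k)}\Big\}-\sum_{k=1}^K(\hat s_k-s_k)\,q(s_k)\,p_k(\mathbf{s}).$$ If $Q$ is convex on $\mathbb{S}$ (equivalently, $q$ is monotonically non-decreasing on $\mathbb{S}$), then for every $\mathbf{s}\in\mathbb{S}^K$ the map $\hat{\mathbf{s}}\mapsto\mathcal{L}_m(\hat{\mathbf{s}},\mathbf{s})$ is convex on $\mathbb{S}^K$; it is the multi-class matching loss (Bregman divergence) of the primitive $H(\mathbf{z})=\log\sum_k e^{Q(z_k)}$, whose gradient components are $q(z_k)p_k(\mathbf{z})$.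
   Context: $p_k$ is the composite Softmax and $q$ the scaling function. The multi-class matching loss with primitive $H$ is $H(\hat{\mathbf{s}})-H(\mathbf{s})-(\hat{\mathbf{s}}-\mathbf{s})\cdot\nabla H(\mathbf{s})$. *)

theory Defs
  imports "HOL-Analysis.Analysis"
begin

text \<open>Vectors in S^K are modelled as elements of real^'k for a finite index type 'k (K = CARD('k)).\<close>

definition cube :: "real set \<Rightarrow> (real^'k) set" where
  "cube S = {z. \<forall>k. z $ k \<in> S}"

definition softmax :: "(real \<Rightarrow> real) \<Rightarrow> real^'k \<Rightarrow> 'k \<Rightarrow> real" where
  "softmax Q z k = exp (Q (z $ k)) / (\<Sum>j\<in>UNIV. exp (Q (z $ j)))"

definition primH :: "(real \<Rightarrow> real) \<Rightarrow> real^'k \<Rightarrow> real" where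
  "primH Q z = ln (\<Sum>k\<in>UNIV. exp (Q (z $ k)))"

definition Lm :: "(real \<Rightarrow> real) \<Rightarrow> (real \<Rightarrow> real) \<Rightarrow> real^'k \<Rightarrow> real^'k \<Rightarrow> real" where
  "Lm Q q shat s = ln (\<Sum>k\<in>UNIV. exp (Q (shat $ k))) - ln (\<Sum>k\<in>UNIV. exp (Q (s $ k)))
      - (\<Sum>k\<in>UNIV. (shat $ k - s $ k) * q (s $ k) * softmax Q s k)"

end

theory Submission
  imports Defs
begin

lemma lse_convex:
  fixes a b :: "'k::finite \<Rightarrow> real" and t :: real
  assumes t0: "0 \<le> t" and t1: "t \<le> 1"
  shows "ln (\<Sum>k\<in>UNIV. exp ((1 - t) * a k + t * b k))
     \<le> (1 - t) * ln (\<Sum>k\<in>UNIV. exp (a k)) + t * ln (\<Sum>k\<in>UNIV. exp (b k))"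
proof -
  define A where "A = (\<Sum>k\<in>UNIV. exp (a k))"
  define B where "B = (\<Sum>k\<in>UNIV. exp (b k))"
  have A0: "A > 0" unfolding A_def by (intro sum_pos) auto
  have B0: "B > 0" unfolding B_def by (intro sum_pos) auto
  define c where "c = (1 - t) * ln A + t * ln B"
  have pk: "exp ((1 - t) * a k + t * b k) / exp c \<le> (1 - t) * (exp (a k) / A) + t * (exp (b k) / B)" for k
  proof -
    have "exp ((1 - t) * a k + t * b k) / exp c = exp ((1 - t) * (a k - ln A) + t * (b k - ln B))"
      by (simp add: c_def exp_diff[symmetric] algebra_simps)
    also have "\<dots> \<le> (1 - t) * exp (a k - ln A) + t * exp (b k - ln B)"
      using convex_onD[OF exp_convex, of t "a k - ln A" "b k - ln B"] t0 t1 by simp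
    also have "\<dots> = (1 - t) * (exp (a k) / A) + t * (exp (b k) / B)"
      using A0 B0 by (simp add: exp_diff)
    finally show ?thesis .
  qed
  have "(\<Sum>k\<in>UNIV. exp ((1 - t) * a k + t * b k)) / exp c
      = (\<Sum>k\<in>UNIV. exp ((1 - t) * a k + t * b k) / exp c)"
    by (simp add: sum_divide_distrib)
  also have "\<dots> \<le> (\<Sum>k\<in>UNIV. (1 - t) * (exp (a k) / A) + t * (exp (b k) / B))"
    by (intro sum_mono pk)
  also have "\<dots> = (1 - t) * (A / A) + t * (B / B)"
    by (simp add: sum.distrib sum_distrib_left[symmetric] sum_divide_distrib[symmetric] A_def B_def)
  also have "\<dots> = 1" using A0 B0 by simp
  finally have "(\<Sum>k\<in>UNIV. exp ((1 - t) * a k + t * b k)) \<le> exp c"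
    by (simp add: divide_le_eq)
  moreover have "(\<Sum>k\<in>UNIV. exp ((1 - t) * a k + t * b k)) > 0" by (intro sum_pos) auto
  ultimately have "ln (\<Sum>k\<in>UNIV. exp ((1 - t) * a k + t * b k)) \<le> c"
    by (metis ln_exp ln_le_cancel_iff exp_gt_zero)
  then show ?thesis unfolding c_def A_def B_def .
qed

theorem theorem4:
  fixes S :: "real set" and Q q :: "real \<Rightarrow> real"
  assumes interval: "is_interval S"
    and Q_cont: "continuous_on S Q"
    and Q_deriv: "\<And>x. x \<in> S \<Longrightarrow> (Q has_real_derivative q x) (at x within S)"
    and q_deriv: "\<exists>q'. \<forall>x\<in>S. (q has_real_derivative q' x) (at x within S)"
    and Q_convex: "convex_on S Q"
  shows "(\<forall>s \<in> cube S. convex_on (cube S) (\<lambda>shat. Lm Q q shat (s :: real^'k)))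
    \<and> (\<forall>shat \<in> cube S. \<forall>s \<in> cube S.
           Lm Q q shat (s :: real^'k) = primH Q shat - primH Q s
             - (\<Sum>k\<in>UNIV. (shat $ k - s $ k) * (q (s $ k) * softmax Q s k)))
    \<and> (\<forall>z \<in> cube S. (primH Q has_derivative
           (\<lambda>h. \<Sum>k\<in>UNIV. h $ k * (q (z $ k) * softmax Q (z :: real^'k) k))) (at z within cube S))"
proof (intro conjI ballI)
  have cS: "convex S" using interval by (simp add: is_interval_convex)
  have ccube: "convex (cube S)"
    unfolding convex_def cube_def using cS[unfolded convex_def] by auto
  fix s :: "real^'k" assume s: "s \<in> cube S"
  show "convex_on (cube S) (\<lambda>shat. Lm Q q shat s)"
  proof (rule convex_onI[OF _ ccube])
    fix t :: real and x y :: "real^'k"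
    assume t: "0 < t" "t < 1" and x: "x \<in> cube S" and y: "y \<in> cube S"
    define C where "C = ln (\<Sum>k\<in>UNIV. exp (Q (s $ k)))"
    define L where "L = (\<lambda>z::real^'k. (\<Sum>k\<in>UNIV. (z $ k - s $ k) * q (s $ k) * softmax Q s k))"
    have Llin: "L ((1 - t) *\<^sub>R x + t *\<^sub>R y) = (1 - t) * L x + t * L y"
    proof -
      have "L ((1 - t) *\<^sub>R x + t *\<^sub>R y) = (\<Sum>k\<in>UNIV. (1 - t) * ((x $ k - s $ k) * q (s $ k) * softmax Q s k)
           + t * ((y $ k - s $ k) * q (s $ k) * softmax Q s k))"
        unfolding L_def by (intro sum.cong) (auto simp: algebra_simps)
      also have "\<dots> = (1 - t) * L x + t * L y"
        unfolding L_def by (simp add: sum.distrib sum_distrib_left)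
      finally show ?thesis .
    qed
    have Qk: "Q (((1 - t) *\<^sub>R x + t *\<^sub>R y) $ k) \<le> (1 - t) * Q (x $ k) + t * Q (y $ k)" for k
      using convex_onD[OF Q_convex, of t "x $ k" "y $ k"] t x y by (simp add: cube_def)
    have "ln (\<Sum>k\<in>UNIV. exp (Q (((1 - t) *\<^sub>R x + t *\<^sub>R y) $ k)))
        \<le> ln (\<Sum>k\<in>UNIV. exp ((1 - t) * Q (x $ k) + t * Q (y $ k)))"
      by (subst ln_le_cancel_iff) (use Qk[simplified] in \<open>auto intro!: sum_pos sum_mono\<close>)
    also have "\<dots> \<le> (1 - t) * ln (\<Sum>k\<in>UNIV. exp (Q (x $ k))) + t * ln (\<Sum>k\<in>UNIV. exp (Q (y $ k)))"
      using lse_convex[of t "\<lambda>k. Q (x $ k)" "\<lambda>k. Q (y $ k)"] t by simp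
    finally have main: "ln (\<Sum>k\<in>UNIV. exp (Q (((1 - t) *\<^sub>R x + t *\<^sub>R y) $ k)))
        \<le> (1 - t) * ln (\<Sum>k\<in>UNIV. exp (Q (x $ k))) + t * ln (\<Sum>k\<in>UNIV. exp (Q (y $ k)))" .
    have eq: "Lm Q q z s = ln (\<Sum>k\<in>UNIV. exp (Q (z $ k))) - C - L z" for z
      unfolding Lm_def C_def L_def by simp
    show "Lm Q q ((1 - t) *\<^sub>R x + t *\<^sub>R y) s \<le> (1 - t) * Lm Q q x s + t * Lm Q q y s"
      unfolding eq using main Llin by (simp add: algebra_simps)
  qed
next
  fix shat s :: "real^'k"
  show "Lm Q q shat s = primH Q shat - primH Q s
             - (\<Sum>k\<in>UNIV. (shat $ k - s $ k) * (q (s $ k) * softmax Q s k))"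
    unfolding Lm_def primH_def by (simp add: mult.assoc)
next
  fix z :: "real^'k" assume z: "z \<in> cube S"
  have dk: "((\<lambda>w::real^'k. Q (w $ k)) has_derivative (\<lambda>h. q (z $ k) * h $ k)) (at z within cube S)" for k
  proof -
    have "((\<lambda>w::real^'k. Q (w $ k)) has_derivative (\<lambda>h. (\<lambda>u. q (z $ k) * u) (h $ k))) (at z within cube S)"
      apply (rule has_derivative_in_compose2[where g = Q and t = S and g' = "\<lambda>x u. q x * u"])
      using Q_deriv z by (auto simp: has_field_derivative_def cube_def
          intro: bounded_linear.has_derivative[OF bounded_linear_vec_nth] has_derivative_ident)
    then show ?thesis by simp
  qed
  define E where "E = (\<Sum>k\<in>UNIV. exp (Q (z $ k)))"
  have E0: "E > 0" unfolding E_def by (intro sum_pos) auto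
  have dsum: "((\<lambda>w::real^'k. \<Sum>k\<in>UNIV. exp (Q (w $ k))) has_derivative
        (\<lambda>h. \<Sum>k\<in>UNIV. exp (Q (z $ k)) * (q (z $ k) * h $ k))) (at z within cube S)"
  proof (intro has_derivative_sum)
    fix k :: 'k
    show "((\<lambda>w::real^'k. exp (Q (w $ k))) has_derivative (\<lambda>h. exp (Q (z $ k)) * (q (z $ k) * h $ k))) (at z within cube S)"
      using has_derivative_exp[OF dk[of k]] by (simp add: mult.commute mult.left_commute)
  qed
  have "((\<lambda>w::real^'k. ln (\<Sum>k\<in>UNIV. exp (Q (w $ k)))) has_derivative
        (\<lambda>h. 1 / E * (\<Sum>k\<in>UNIV. exp (Q (z $ k)) * (q (z $ k) * h $ k)))) (at z within cube S)"
    using has_derivative_ln[OF _ dsum] E0 unfolding E_def by (simp add: divide_inverse mult.commute)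
  moreover have "(\<lambda>h. 1 / E * (\<Sum>k\<in>UNIV. exp (Q (z $ k)) * (q (z $ k) * h $ k)))
      = (\<lambda>h. \<Sum>k\<in>UNIV. h $ k * (q (z $ k) * softmax Q z k))"
    by (auto simp: softmax_def E_def[symmetric] sum_distrib_left intro!: sum.cong)
  ultimately show "(primH Q has_derivative
           (\<lambda>h. \<Sum>k\<in>UNIV. h $ k * (q (z $ k) * softmax Q z k))) (at z within cube S)"
    unfolding primH_def[abs_def] by simp
qed

end
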